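(* Under the same setting (with $d>k\geq1$, $\varepsilon\in(0,1)$, $A\succeq0$ symmetric with $\lambda_k>\lambda_{k+1}$, $\beta>0$ with $\lambda_k>2\sqrt\beta\geq\lambda_{k+1}$, $X_0\in\mathrm{St}(d,k)$ with $\cos\theta_k(U_k,X_0)>0$, and ANPM perturbations satisfying for all $t\geq0$: $\|U_{-k}^\top\Xi_t\|_2\leq c(\lambda_k-2\sqrt\beta)\varepsilon$ and $\|U_k^\top\Xi_t\|_2\leq c(\lambda_k-2\sqrt\beta)\cos\theta_k(U_k,X_t)$, $c=1/32$), for all $t\geq0$, $$H_t=p_t(\Lambda_{-k})H_0C_t^{-1}+\sum_{s=0}^{t-1}q_s(\Lambda_{-k})\Psi_{t-1-s}C_{t-1-s}C_t^{-1}.$$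
   Context: $A$ has eigenvalues $\lambda_1\geq\dots\geq\lambda_d\geq0$, orthonormal eigenvectors $u_i$; $U_k:=[u_1..u_k]$, $U_{-k}:=[u_{k+1}..u_d]$, $\Lambda_k:=\mathrm{diag}(\lambda_1..\lambda_k)$, $\Lambda_{-k}:=\mathrm{diag}(\lambda_{k+1}..\lambda_d)$. QR: $Y=XR$, $X^\top X=I_k$, $R$ upper triangular, nonnegative diagonal; $\theta_k(U,X):=\arccos\sigma_{\min}(U^\top X)$. ANPM: $(X_1,R_1)=\mathrm{QR}(\tfrac12AX_0+\Xi_0)$; for $t\geq1$, $Y_{t+1}=AX_t-\beta X_{t-1}R_t^{-1}+\Xi_t$, $(X_{t+1},R_{t+1})=\mathrm{QR}(Y_{t+1})$. $H_t:=(U_{-k}^\top X_t)(U_k^\top X_t)^{-1}$; $\Psi_t:=(U_{-k}^\top\Xi_t)(U_k^\top X_t)^{-1}$; $E_t:=\Lambda_k^{-1}(U_k^\top\Xi_t)(U_k^\top X_t)^{-1}$; $G_0:=(I_k/2+E_0)^{-1}$, $G_{t+1}:=(I_k-\beta\Lambda_k^{-1}G_t\Lambda_k^{-1}+E_{t+1})^{-1}$; $C_0:=I_k$, $C_t:=\Lambda_kG_{t-1}^{-1}\Lambda_kG_{t-2}^{-1}\cdots\Lambda_kG_0^{-1}$. Polynomials: $p_0=1$, $p_1(x)=x/2$, $p_{t+1}(x)=xp_t(x)-\beta p_{t-1}(x)$; $q_0=1$, $q_1(x)=x$, $q_{t+1}(x)=xq_t(x)-\beta q_{t-1}(x)$.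 *)

theory Defs
  imports Complex_Main "HOL-Computational_Algebra.Polynomial" "Jordan_Normal_Form.Matrix"
begin

definition vnorm :: "real vec \<Rightarrow> real" where
  "vnorm v = sqrt (v \<bullet> v)"

definition spec_norm :: "real mat \<Rightarrow> real" where
  "spec_norm M = Sup {vnorm (M *\<^sub>v x) | x. x \<in> carrier_vec (dim_col M) \<and> vnorm x = 1}"

definition sigma_min :: "real mat \<Rightarrow> real" where
  "sigma_min M = Inf {vnorm (M *\<^sub>v x) | x. x \<in> carrier_vec (dim_col M) \<and> vnorm x = 1}"

definition theta_k :: "real mat \<Rightarrow> real mat \<Rightarrow> real" where
  "theta_k U X = arccos (sigma_min (transpose_mat U * X))"

definition minv :: "real mat \<Rightarrow> real mat" where
  "minv M = (SOME B. B \<in> carrier_mat (dim_col M) (dim_row M) \<and> inverts_mat M B \<and> inverts_mat B M)"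

definition stiefel :: "nat \<Rightarrow> nat \<Rightarrow> real mat set" where
  "stiefel d k = {X. X \<in> carrier_mat d k \<and> transpose_mat X * X = 1\<^sub>m k}"

definition is_QR :: "real mat \<Rightarrow> real mat \<Rightarrow> real mat \<Rightarrow> bool" where
  "is_QR Y Q R \<longleftrightarrow> Q \<in> carrier_mat (dim_row Y) (dim_col Y) \<and> R \<in> carrier_mat (dim_col Y) (dim_col Y)
     \<and> Y = Q * R \<and> transpose_mat Q * Q = 1\<^sub>m (dim_col Y) \<and> upper_triangular R
     \<and> (\<forall>i < dim_col Y. R $$ (i,i) \<ge> 0)"

definition poly_mat :: "nat \<Rightarrow> real poly \<Rightarrow> real mat \<Rightarrow> real mat" where
  "poly_mat n p M = mat n n (\<lambda>(i,j). \<Sum>l\<le>degree p. coeff p l * (M ^\<^sub>m l) $$ (i,j))"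

definition msum :: "nat \<Rightarrow> nat \<Rightarrow> (nat \<Rightarrow> real mat) \<Rightarrow> nat \<Rightarrow> real mat" where
  "msum nr nc f t = mat nr nc (\<lambda>(i,j). \<Sum>s<t. f s $$ (i,j))"

fun pP :: "real \<Rightarrow> nat \<Rightarrow> real poly" where
  "pP \<beta> 0 = 1"
| "pP \<beta> (Suc 0) = [:0, 1/2:]"
| "pP \<beta> (Suc (Suc t)) = [:0, 1:] * pP \<beta> (Suc t) - Polynomial.smult \<beta> (pP \<beta> t)"

fun qP :: "real \<Rightarrow> nat \<Rightarrow> real poly" where
  "qP \<beta> 0 = 1"
| "qP \<beta> (Suc 0) = [:0, 1:]"
| "qP \<beta> (Suc (Suc t)) = [:0, 1:] * qP \<beta> (Suc t) - Polynomial.smult \<beta> (qP \<beta> t)"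

definition Ufst :: "real mat \<Rightarrow> nat \<Rightarrow> real mat" where
  "Ufst U k = mat (dim_row U) k (\<lambda>(i,j). U $$ (i,j))"

definition Urest :: "real mat \<Rightarrow> nat \<Rightarrow> real mat" where
  "Urest U k = mat (dim_row U) (dim_col U - k) (\<lambda>(i,j). U $$ (i, j + k))"

(* Lambda_k = diag(lambda_1..lambda_k), Lambda_{-k} = diag(lambda_{k+1}..lambda_d);
   eigenvalues are 0-indexed: lam i = lambda_{i+1} *)
definition Lfst :: "(nat \<Rightarrow> real) \<Rightarrow> nat \<Rightarrow> real mat" where
  "Lfst lam k = mat_diag k lam"

definition Lrest :: "(nat \<Rightarrow> real) \<Rightarrow> nat \<Rightarrow> nat \<Rightarrow> real mat" where
  "Lrest lam d k = mat_diag (d - k) (\<lambda>i. lam (i + k))"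

definition Hm :: "real mat \<Rightarrow> nat \<Rightarrow> (nat \<Rightarrow> real mat) \<Rightarrow> nat \<Rightarrow> real mat" where
  "Hm U k X t = (transpose_mat (Urest U k) * X t) * minv (transpose_mat (Ufst U k) * X t)"

definition Psim :: "real mat \<Rightarrow> nat \<Rightarrow> (nat \<Rightarrow> real mat) \<Rightarrow> (nat \<Rightarrow> real mat) \<Rightarrow> nat \<Rightarrow> real mat" where
  "Psim U k X Xi t = (transpose_mat (Urest U k) * Xi t) * minv (transpose_mat (Ufst U k) * X t)"

definition Em :: "real mat \<Rightarrow> (nat \<Rightarrow> real) \<Rightarrow> nat \<Rightarrow> (nat \<Rightarrow> real mat) \<Rightarrow> (nat \<Rightarrow> real mat) \<Rightarrow> nat \<Rightarrow> real mat" where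
  "Em U lam k X Xi t = minv (Lfst lam k) * (transpose_mat (Ufst U k) * Xi t) * minv (transpose_mat (Ufst U k) * X t)"

fun Gm :: "real mat \<Rightarrow> (nat \<Rightarrow> real) \<Rightarrow> nat \<Rightarrow> real \<Rightarrow> (nat \<Rightarrow> real mat) \<Rightarrow> (nat \<Rightarrow> real mat) \<Rightarrow> nat \<Rightarrow> real mat" where
  "Gm U lam k \<beta> X Xi 0 = minv ((1/2) \<cdot>\<^sub>m 1\<^sub>m k + Em U lam k X Xi 0)"
| "Gm U lam k \<beta> X Xi (Suc t) =
     minv (1\<^sub>m k - \<beta> \<cdot>\<^sub>m (minv (Lfst lam k) * Gm U lam k \<beta> X Xi t * minv (Lfst lam k)) + Em U lam k X Xi (Suc t))"

fun Cm :: "real mat \<Rightarrow> (nat \<Rightarrow> real) \<Rightarrow> nat \<Rightarrow> real \<Rightarrow> (nat \<Rightarrow> real mat) \<Rightarrow> (nat \<Rightarrow> real mat) \<Rightarrow> nat \<Rightarrow> real mat" where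
  "Cm U lam k \<beta> X Xi 0 = 1\<^sub>m k"
| "Cm U lam k \<beta> X Xi (Suc t) = Lfst lam k * minv (Gm U lam k \<beta> X Xi t) * Cm U lam k \<beta> X Xi t"

end

theory Submission
  imports Defs "Jordan_Normal_Form.Determinant" "HOL-Analysis.L2_Norm"
begin


lemma vnorm_L2: "vnorm v = L2_set (\<lambda>i. v $ i) {0..<dim_vec v}"
  unfolding vnorm_def L2_set_def scalar_prod_def by (simp add: power2_eq_square)

lemma vnorm_nonneg: "vnorm v \<ge> 0"
  unfolding vnorm_L2 by simp

lemma vnorm_add: assumes "dim_vec u = dim_vec w"
  shows "vnorm (u + w) \<le> vnorm u + vnorm w"
proof -
  have "vnorm (u + w) = L2_set (\<lambda>i. u $ i + w $ i) {0..<dim_vec w}"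
    unfolding vnorm_L2 using assms by (intro L2_set_cong) auto
  also have "\<dots> \<le> vnorm u + vnorm w" unfolding vnorm_L2 using assms L2_set_triangle_ineq by metis
  finally show ?thesis .
qed

lemma vnorm_smult: "vnorm (c \<cdot>\<^sub>v v) = \<bar>c\<bar> * vnorm v"
proof -
  have "(\<Sum>i\<in>{0..<dim_vec v}. ((c \<cdot>\<^sub>v v) $ i)\<^sup>2) = c\<^sup>2 * (\<Sum>i\<in>{0..<dim_vec v}. (v $ i)\<^sup>2)"
    by (simp add: power_mult_distrib sum_distrib_left)
  then show ?thesis unfolding vnorm_L2 L2_set_def by (simp add: real_sqrt_mult)
qed

lemma vnorm_uminus: "vnorm (- v) = vnorm v"
proof -
  have "- v = (-1) \<cdot>\<^sub>v v" by auto
  then show ?thesis using vnorm_smult[of "-1" v] by simp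
qed

lemma vnorm_minus: assumes "dim_vec u = dim_vec w"
  shows "vnorm (u - w) \<le> vnorm u + vnorm w"
proof -
  have "u - w = u + (- w)" using assms by auto
  then show ?thesis using vnorm_add[of u "- w"] assms vnorm_uminus[of w] by simp
qed

lemma vnorm_zero_imp: "vnorm v = 0 \<Longrightarrow> v = 0\<^sub>v (dim_vec v)"
  unfolding vnorm_L2 by (intro eq_vecI) (auto simp: L2_set_eq_0_iff)

lemma vnorm_zero[simp]: "vnorm (0\<^sub>v n) = 0"
  unfolding vnorm_L2 by (auto simp: L2_set_eq_0_iff)

lemma vnorm_comp_le: "i < dim_vec v \<Longrightarrow> \<bar>v $ i\<bar> \<le> vnorm v"
proof -
  assume i: "i < dim_vec v"
  have "\<bar>v $ i\<bar> \<le> L2_set (\<lambda>i. \<bar>v $ i\<bar>) {0..<dim_vec v}"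
    by (rule member_le_L2_set) (use i in auto)
  also have "\<dots> = vnorm v" unfolding vnorm_L2 L2_set_def by simp
  finally show ?thesis .
qed


lemma unit_scale:
  assumes x: "x \<in> carrier_vec n" and nz: "vnorm x \<noteq> 0"
  shows "vnorm ((1 / vnorm x) \<cdot>\<^sub>v x) = 1" "(1 / vnorm x) \<cdot>\<^sub>v x \<in> carrier_vec n"
  using x nz vnorm_nonneg[of x] by (auto simp: vnorm_smult)

lemma mat_vec_comp_bound:
  assumes M: "M \<in> carrier_mat nr nc" and y: "y \<in> carrier_vec nc" and i: "i < nr"
  shows "\<bar>(M *\<^sub>v y) $ i\<bar> \<le> (\<Sum>j<nc. \<bar>M $$ (i,j)\<bar>) * vnorm y"
proof -
  have "(M *\<^sub>v y) $ i = (\<Sum>j\<in>{0..<nc}. M $$ (i,j) * y $ j)"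
    using M y i by (simp add: mult_mat_vec_def scalar_prod_def)
  then have "\<bar>(M *\<^sub>v y) $ i\<bar> \<le> (\<Sum>j\<in>{0..<nc}. \<bar>M $$ (i,j)\<bar> * \<bar>y $ j\<bar>)"
    by (simp add: sum_abs[THEN order_trans] abs_mult)
  also have "\<dots> \<le> (\<Sum>j\<in>{0..<nc}. \<bar>M $$ (i,j)\<bar> * vnorm y)"
    by (intro sum_mono mult_left_mono) (use y vnorm_comp_le[of _ y] in auto)
  also have "\<dots> = (\<Sum>j<nc. \<bar>M $$ (i,j)\<bar>) * vnorm y"
    by (simp add: sum_distrib_right atLeast0LessThan)
  finally show ?thesis .
qed

lemma mat_vec_bound:
  assumes M: "M \<in> carrier_mat nr nc" and y: "y \<in> carrier_vec nc"
  shows "vnorm (M *\<^sub>v y) \<le> (\<Sum>i<nr. \<Sum>j<nc. \<bar>M $$ (i,j)\<bar>) * vnorm y"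
proof -
  have "vnorm (M *\<^sub>v y) \<le> (\<Sum>i\<in>{0..<nr}. \<bar>(M *\<^sub>v y) $ i\<bar>)"
    unfolding vnorm_L2 using M by (metis L2_set_le_sum_abs carrier_matD(1) dim_mult_mat_vec)
  also have "\<dots> \<le> (\<Sum>i\<in>{0..<nr}. (\<Sum>j<nc. \<bar>M $$ (i,j)\<bar>) * vnorm y)"
    by (intro sum_mono mat_vec_comp_bound[OF M y]) auto
  also have "\<dots> = (\<Sum>i<nr. \<Sum>j<nc. \<bar>M $$ (i,j)\<bar>) * vnorm y"
    by (simp add: sum_distrib_right atLeast0LessThan)
  finally show ?thesis .
qed

lemma spec_norm_bound:
  assumes x: "x \<in> carrier_vec (dim_col M)"
  shows "vnorm (M *\<^sub>v x) \<le> spec_norm M * vnorm x"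
proof (cases "vnorm x = 0")
  case True
  then have "x = 0\<^sub>v (dim_col M)" using vnorm_zero_imp[of x] x by auto
  moreover have "M *\<^sub>v 0\<^sub>v (dim_col M) = 0\<^sub>v (dim_row M)"
    by (intro eq_vecI) (auto simp: scalar_prod_def)
  ultimately show ?thesis using True by simp
next
  case False
  define y where "y = (1 / vnorm x) \<cdot>\<^sub>v x"
  have y1: "vnorm y = 1" and yc: "y \<in> carrier_vec (dim_col M)"
    using unit_scale[OF x False] unfolding y_def by auto
  let ?S = "{vnorm (M *\<^sub>v x) | x. x \<in> carrier_vec (dim_col M) \<and> vnorm x = 1}"
  have Mc: "M \<in> carrier_mat (dim_row M) (dim_col M)" by auto
  have "bdd_above ?S"
    unfolding bdd_above_def using mat_vec_bound[OF Mc] by fastforce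
  moreover have "vnorm (M *\<^sub>v y) \<in> ?S" using y1 yc by auto
  ultimately have "vnorm (M *\<^sub>v y) \<le> spec_norm M" unfolding spec_norm_def by (meson cSup_upper)
  moreover have "M *\<^sub>v y = (1 / vnorm x) \<cdot>\<^sub>v (M *\<^sub>v x)"
    unfolding y_def using x Mc by (metis mult_mat_vec)
  ultimately have "vnorm (M *\<^sub>v x) / vnorm x \<le> spec_norm M"
    using vnorm_nonneg[of x] by (simp add: vnorm_smult)
  then show ?thesis using False vnorm_nonneg[of x] by (simp add: divide_le_eq mult.commute)
qed

lemma sigma_min_bound:
  assumes x: "x \<in> carrier_vec (dim_col M)"
  shows "sigma_min M * vnorm x \<le> vnorm (M *\<^sub>v x)"
proof (cases "vnorm x = 0")
  case True
  then show ?thesis using vnorm_nonneg[of "M *\<^sub>v x"] by simp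
next
  case False
  define y where "y = (1 / vnorm x) \<cdot>\<^sub>v x"
  have y1: "vnorm y = 1" and yc: "y \<in> carrier_vec (dim_col M)"
    using unit_scale[OF x False] unfolding y_def by auto
  let ?S = "{vnorm (M *\<^sub>v x) | x. x \<in> carrier_vec (dim_col M) \<and> vnorm x = 1}"
  have Mc: "M \<in> carrier_mat (dim_row M) (dim_col M)" by auto
  have "bdd_below ?S"
    unfolding bdd_below_def using vnorm_nonneg by fastforce
  moreover have "vnorm (M *\<^sub>v y) \<in> ?S" using y1 yc by auto
  ultimately have "sigma_min M \<le> vnorm (M *\<^sub>v y)" unfolding sigma_min_def by (meson cInf_lower)
  moreover have "M *\<^sub>v y = (1 / vnorm x) \<cdot>\<^sub>v (M *\<^sub>v x)"
    unfolding y_def using x Mc by (metis mult_mat_vec)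
  ultimately have "sigma_min M \<le> vnorm (M *\<^sub>v x) / vnorm x"
    using vnorm_nonneg[of x] by (simp add: vnorm_smult)
  then show ?thesis using False vnorm_nonneg[of x] by (simp add: le_divide_eq mult.commute)
qed

lemma sigma_min_nonneg:
  assumes "dim_col M > 0"
  shows "sigma_min M \<ge> 0"
proof -
  let ?S = "{vnorm (M *\<^sub>v x) | x. x \<in> carrier_vec (dim_col M) \<and> vnorm x = 1}"
  let ?e = "unit_vec (dim_col M) 0 :: real vec"
  have "vnorm ?e = 1" unfolding vnorm_def using assms by simp
  then have "vnorm (M *\<^sub>v ?e) \<in> ?S" by (auto intro!: exI[of _ ?e])
  then have "?S \<noteq> {}" by blast
  then show ?thesis unfolding sigma_min_def by (rule cInf_greatest) (auto simp: vnorm_nonneg)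
qed

lemma cos_arccos_le: "0 \<le> (y::real) \<Longrightarrow> cos (arccos y) \<le> y"
  by (cases "y \<le> 1") (auto simp: cos_arccos intro: order_trans[OF cos_le_one])

lemma cos_arccos_pos: "0 \<le> (y::real) \<Longrightarrow> cos (arccos y) > 0 \<Longrightarrow> y > 0"
  by (cases "y \<le> 1") (auto simp: cos_arccos)




lemma minv_props:
  assumes A: "A \<in> carrier_mat n n" and d: "det A \<noteq> 0"
  shows "minv A \<in> carrier_mat n n" "A * minv A = 1\<^sub>m n" "minv A * A = 1\<^sub>m n"
proof -
  from det_non_zero_imp_unit[OF A d, of "()"]
  obtain B where B: "B \<in> carrier_mat n n" "B * A = 1\<^sub>m n" "A * B = 1\<^sub>m n"
    unfolding Units_def ring_mat_def by auto
  have ex: "\<exists>B. B \<in> carrier_mat (dim_col A) (dim_row A) \<and> inverts_mat A B \<and> inverts_mat B A"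
    using A B by (intro exI[of _ B]) (auto simp: inverts_mat_def)
  have "minv A \<in> carrier_mat (dim_col A) (dim_row A) \<and> inverts_mat A (minv A) \<and> inverts_mat (minv A) A"
    unfolding minv_def by (rule someI_ex[OF ex])
  then show "minv A \<in> carrier_mat n n" "A * minv A = 1\<^sub>m n" "minv A * A = 1\<^sub>m n"
    using A by (auto simp: inverts_mat_def)
qed

lemma minv_unique:
  assumes A: "A \<in> carrier_mat n n" and B: "B \<in> carrier_mat n n" and AB: "A * B = 1\<^sub>m n"
  shows "minv A = B"
proof -
  have d: "det A \<noteq> 0" using det_mult[OF A B] AB by auto
  note mi = minv_props[OF A d]
  have "minv A = minv A * (A * B)" using mi(1) AB by simp
  also have "\<dots> = (minv A * A) * B" using assoc_mult_mat[OF mi(1) A B] by simp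
  also have "\<dots> = B" using mi(3) B by simp
  finally show ?thesis .
qed

lemma det_nz_of_lower:
  assumes A: "A \<in> carrier_mat n n" and m: "m > 0"
    and lb: "\<forall>v\<in>carrier_vec n. m * vnorm v \<le> vnorm (A *\<^sub>v v)"
  shows "det A \<noteq> 0"
proof
  assume "det A = 0"
  then obtain v where v: "v \<in> carrier_vec n" "v \<noteq> 0\<^sub>v n" "A *\<^sub>v v = 0\<^sub>v n"
    using det_0_iff_vec_prod_zero_field[OF A] by auto
  then have "m * vnorm v \<le> 0" using lb by force
  then have "vnorm v = 0" using m vnorm_nonneg[of v] by (simp add: mult_le_0_iff)
  then show False using vnorm_zero_imp[of v] v by auto
qed

lemma pow_mat_diag: "mat_diag n (f :: nat \<Rightarrow> real) ^\<^sub>m l = mat_diag n (\<lambda>i. f i ^ l)"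
  apply (induct l)
   apply (simp add: mat_diag_def)
  apply simp
  apply (rule arg_cong[of _ _ "mat_diag n"])
  apply (simp add: fun_eq_iff mult.commute)
  done

lemma poly_mat_diag: "poly_mat n p (mat_diag n f) = mat_diag n (\<lambda>i. poly p (f i))"
proof (rule eq_matI)
  fix i j assume ij: "i < dim_row (mat_diag n (\<lambda>i. poly p (f i)))" "j < dim_col (mat_diag n (\<lambda>i. poly p (f i)))"
  then have ij': "i < n" "j < n" by (simp_all add: mat_diag_def)
  show "poly_mat n p (mat_diag n f) $$ (i, j) = mat_diag n (\<lambda>i. poly p (f i)) $$ (i, j)"
    unfolding poly_mat_def pow_mat_diag using ij'
    by (cases "i = j") (simp_all add: mat_diag_def poly_altdef)
qed (simp_all add: poly_mat_def mat_diag_def)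
lemma q_rec: "poly (qP \<beta> (Suc s)) x = x * poly (qP \<beta> s) x - \<beta> * (if s = 0 then 0 else poly (qP \<beta> (s - 1)) x)"
  by (cases s) auto

lemma scalar_rec:
  fixes kk w :: "nat \<Rightarrow> real"
  assumes k1: "kk 1 = x / 2 * kk 0 + w 0"
    and kr: "\<And>t. kk (Suc (Suc t)) = x * kk (Suc t) - \<beta> * kk t + w (Suc t)"
  shows "kk t = poly (pP \<beta> t) x * kk 0 + (\<Sum>s<t. poly (qP \<beta> s) x * w (t - 1 - s))"
proof (induction t rule: nat_less_induct)
  case (1 t)
  show ?case
  proof (cases t)
    case 0 then show ?thesis by simp
  next
    case (Suc n)
    show ?thesis
    proof (cases n)
      case 0 then show ?thesis using Suc k1 by simp
    next
      case (Suc m)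
      have tm: "t = Suc (Suc m)" using \<open>t = Suc n\<close> Suc by simp
      have IH1: "kk (Suc m) = poly (pP \<beta> (Suc m)) x * kk 0 + (\<Sum>s<Suc m. poly (qP \<beta> s) x * w (m - s))"
        using 1[rule_format, of "Suc m"] tm by simp
      have IH2: "kk m = poly (pP \<beta> m) x * kk 0 + (\<Sum>s<m. poly (qP \<beta> s) x * w (m - 1 - s))"
        using 1[rule_format, of m] tm by simp
      have S: "(\<Sum>s<Suc (Suc m). poly (qP \<beta> s) x * w (Suc (Suc m) - 1 - s))
          = w (Suc m) + (\<Sum>s<Suc m. poly (qP \<beta> (Suc s)) x * w (m - s))"
        by (subst sum.lessThan_Suc_shift) simp
      have S2: "(\<Sum>s<Suc m. poly (qP \<beta> (Suc s)) x * w (m - s))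
          = (\<Sum>s<Suc m. x * (poly (qP \<beta> s) x * w (m - s)))
            - (\<Sum>s<Suc m. \<beta> * ((if s = 0 then 0 else poly (qP \<beta> (s - 1)) x) * w (m - s)))"
        unfolding q_rec sum_subtractf[symmetric] by (rule sum.cong) (simp_all only: left_diff_distrib mult.assoc)
      have S3: "(\<Sum>s<Suc m. (if s = 0 then 0 else poly (qP \<beta> (s - 1)) x) * w (m - s))
          = (\<Sum>s<m. poly (qP \<beta> s) x * w (m - 1 - s))"
        by (subst sum.lessThan_Suc_shift) simp
      have "kk t = kk (Suc (Suc m))" using tm by simp
      also have "\<dots> = x * kk (Suc m) - \<beta> * kk m + w (Suc m)" by (rule kr)
      also have "\<dots> = poly (pP \<beta> (Suc (Suc m))) x * kk 0
          + (\<Sum>s<Suc (Suc m). poly (qP \<beta> s) x * w (Suc (Suc m) - 1 - s))"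
        unfolding S S2 sum_distrib_left[symmetric] S3 IH1 IH2 by (simp add: algebra_simps)
      finally show ?thesis using tm by simp
    qed
  qed
qed


lemma mm_assoc: "dim_col A = dim_row B \<Longrightarrow> dim_col B = dim_row C \<Longrightarrow> A * B * C = A * (B * (C :: real mat))"
  by (rule assoc_mult_mat[of A "dim_row A" "dim_col A" B "dim_col B" C "dim_col C"]) auto

lemma dd_add_r: assumes "dim_row A = dim_row B" "dim_col A = dim_col B" "dim_col B = dim_row C"
  shows "(A + B) * C = A * C + B * (C::real mat)"
  using add_mult_distrib_mat[OF carrier_matI[OF assms(1,2)] carrier_matI[OF refl refl] carrier_matI[OF assms(3)[symmetric] refl]] .
lemma dd_minus_r: assumes "dim_row A = dim_row B" "dim_col A = dim_col B" "dim_col B = dim_row C"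
  shows "(A - B) * C = A * C - B * (C::real mat)"
  using minus_mult_distrib_mat[OF carrier_matI[OF assms(1,2)] carrier_matI[OF refl refl] carrier_matI[OF assms(3)[symmetric] refl]] .
lemma dd_add_l: assumes "dim_col A = dim_row B" "dim_row B = dim_row C" "dim_col B = dim_col C"
  shows "A * (B + C) = A * B + A * (C::real mat)"
  using mult_add_distrib_mat[OF carrier_matI[OF refl assms(1)] carrier_matI[OF refl refl] carrier_matI[OF assms(2)[symmetric] assms(3)[symmetric]]] .
lemma dd_minus_l: assumes "dim_col A = dim_row B" "dim_row B = dim_row C" "dim_col B = dim_col C"
  shows "A * (B - C) = A * B - A * (C::real mat)"
  using mult_minus_distrib_mat[OF carrier_matI[OF refl assms(1)] carrier_matI[OF refl refl] carrier_matI[OF assms(2)[symmetric] assms(3)[symmetric]]] .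
lemma dd_smult_r: assumes "dim_col A = dim_row B" shows "(c \<cdot>\<^sub>m A) * B = c \<cdot>\<^sub>m (A * (B::real mat))"
  using mult_smult_assoc_mat[OF carrier_matI[OF refl assms(1)] carrier_matI[OF refl refl]] .
lemma dd_smult_l: assumes "dim_col A = dim_row B" shows "A * (c \<cdot>\<^sub>m B) = c \<cdot>\<^sub>m (A * (B::real mat))"
  using mult_smult_distrib[OF carrier_matI[OF refl assms(1)] carrier_matI[OF refl refl]] .
lemma dd_cancel: "A * B = 1\<^sub>m n \<Longrightarrow> dim_col A = dim_row B \<Longrightarrow> dim_row C = dim_col B \<Longrightarrow> A * (B * C) = (C::real mat)"
proof -
  assume ab: "A * B = 1\<^sub>m n" and d1: "dim_col A = dim_row B" and d2: "dim_row C = dim_col B"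
  have n: "dim_col B = n" using arg_cong[OF ab, of dim_col] by simp
  have "A * (B * C) = (A * B) * C" using mm_assoc[OF d1 d2[symmetric]] by simp
  also have "\<dots> = C" unfolding ab using d2 n by simp
  finally show ?thesis .
qed

lemmas dd_simps = mm_assoc dd_add_r dd_minus_r dd_add_l dd_minus_l dd_smult_r dd_smult_l



lemma eig_T:
  fixes A U :: "real mat"
  assumes A: "A \<in> carrier_mat d d" and As: "transpose_mat A = A" and U: "U \<in> carrier_mat d d"
    and eig: "\<forall>i<d. A *\<^sub>v col U i = lam i \<cdot>\<^sub>v col U i" and ms: "m + s \<le> d"
  shows "transpose_mat (mat d m (\<lambda>(i,j). U $$ (i, j + s))) * A
       = mat_diag m (\<lambda>i. lam (i + s)) * transpose_mat (mat d m (\<lambda>(i,j). U $$ (i, j + s)))"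
proof -
  let ?T = "transpose_mat (mat d m (\<lambda>(i,j). U $$ (i, j + s)))"
  have T: "?T \<in> carrier_mat m d" by auto
  have rhs: "mat_diag m (\<lambda>i. lam (i + s)) * ?T = mat m d (\<lambda>(i,j). lam (i + s) * ?T $$ (i,j))"
    by (rule mat_diag_mult_left[OF T])
  show ?thesis unfolding rhs
  proof (rule eq_matI)
    fix i j assume "i < dim_row (mat m d (\<lambda>(i,j). lam (i + s) * ?T $$ (i,j)))"
      "j < dim_col (mat m d (\<lambda>(i,j). lam (i + s) * ?T $$ (i,j)))"
    then have ij: "i < m" "j < d" by auto
    have isd: "i + s < d" using ij ms by auto
    have Asym: "A $$ (l, j) = A $$ (j, l)" if "l < d" for l
    proof -
      have "A $$ (l, j) = transpose_mat A $$ (l, j)" using As by simp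
      also have "\<dots> = A $$ (j, l)" using A that ij by simp
      finally show ?thesis .
    qed
    have "(A *\<^sub>v col U (i + s)) $ j = (lam (i + s) \<cdot>\<^sub>v col U (i + s)) $ j"
      using eig isd by simp
    then have e: "(\<Sum>l = 0..<d. A $$ (j, l) * U $$ (l, i + s)) = lam (i + s) * U $$ (j, i + s)"
      using A U ij isd by (simp add: scalar_prod_def)
    have "(?T * A) $$ (i, j) = (\<Sum>l = 0..<d. U $$ (l, i + s) * A $$ (l, j))"
      using A U ij by (simp add: scalar_prod_def)
    also have "\<dots> = (\<Sum>l = 0..<d. A $$ (j, l) * U $$ (l, i + s))"
      by (rule sum.cong) (auto simp: Asym mult.commute)
    also have "\<dots> = lam (i + s) * ?T $$ (i, j)" using e ij by simp
    finally show "(?T * A) $$ (i, j) = mat m d (\<lambda>(i,j). lam (i + s) * ?T $$ (i,j)) $$ (i, j)"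
      using ij by simp
  qed (use A in auto)
qed



lemma proj0:
  fixes T A D X0 Xi0 :: "real mat"
  assumes T: "T \<in> carrier_mat m d" and A: "A \<in> carrier_mat d d" and D: "D \<in> carrier_mat m m"
    and TA: "T * A = D * T" and X0: "X0 \<in> carrier_mat d k" and Xi0: "Xi0 \<in> carrier_mat d k"
  shows "T * ((1/2) \<cdot>\<^sub>m (A * X0) + Xi0) = (1/2) \<cdot>\<^sub>m (D * (T * X0)) + T * Xi0"
proof -
  have "T * ((1/2) \<cdot>\<^sub>m (A * X0) + Xi0) = T * ((1/2) \<cdot>\<^sub>m (A * X0)) + T * Xi0"
    using T A X0 Xi0 by (intro mult_add_distrib_mat) auto
  also have "T * ((1/2) \<cdot>\<^sub>m (A * X0)) = (1/2) \<cdot>\<^sub>m (T * (A * X0))"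
    using T A X0 by (intro mult_smult_distrib) auto
  also have "T * (A * X0) = D * (T * X0)"
    using assoc_mult_mat[OF T A X0] assoc_mult_mat[OF D T X0] TA by simp
  finally show ?thesis .
qed



lemma projS:
  fixes T A D X0 X1 Xi1 M :: "real mat"
  assumes T: "T \<in> carrier_mat m d" and A: "A \<in> carrier_mat d d" and D: "D \<in> carrier_mat m m"
    and TA: "T * A = D * T" and X0: "X0 \<in> carrier_mat d k" and X1: "X1 \<in> carrier_mat d k"
    and Xi1: "Xi1 \<in> carrier_mat d k" and M: "M \<in> carrier_mat k k"
  shows "T * (A * X1 - b \<cdot>\<^sub>m (X0 * M) + Xi1) = D * (T * X1) - b \<cdot>\<^sub>m ((T * X0) * M) + T * Xi1"
proof -
  have c1: "A * X1 - b \<cdot>\<^sub>m (X0 * M) \<in> carrier_mat d k" using A X1 X0 M by (auto intro: minus_carrier_mat)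
  have "T * (A * X1 - b \<cdot>\<^sub>m (X0 * M) + Xi1) = T * (A * X1 - b \<cdot>\<^sub>m (X0 * M)) + T * Xi1"
    using T c1 Xi1 by (intro mult_add_distrib_mat) auto
  also have "T * (A * X1 - b \<cdot>\<^sub>m (X0 * M)) = T * (A * X1) - T * (b \<cdot>\<^sub>m (X0 * M))"
    using T A X1 X0 M by (intro mult_minus_distrib_mat) auto
  also have "T * (b \<cdot>\<^sub>m (X0 * M)) = b \<cdot>\<^sub>m (T * (X0 * M))"
    using T X0 M by (intro mult_smult_distrib) auto
  also have "T * (X0 * M) = (T * X0) * M" using assoc_mult_mat[OF T X0 M] by simp
  also have "T * (A * X1) = D * (T * X1)"
    using assoc_mult_mat[OF T A X1] assoc_mult_mat[OF D T X1] TA by simp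
  finally show ?thesis .
qed



lemma diag_inv_bound:
  fixes lam :: "nat \<Rightarrow> real"
  assumes lb: "\<forall>i<k. lam i \<ge> L0" and L0: "L0 > 0" and v: "v \<in> carrier_vec k"
  shows "vnorm (mat_diag k (\<lambda>i. 1 / lam i) *\<^sub>v v) \<le> (1 / L0) * vnorm v"
proof -
  let ?M = "mat_diag k (\<lambda>i. 1 / lam i)"
  have c: "(?M *\<^sub>v v) $ i = v $ i / lam i" if "i < k" for i
  proof -
    have "(?M *\<^sub>v v) $ i = (\<Sum>j = 0..<k. (if i = j then 1 / lam j else 0) * v $ j)"
      using that v unfolding mat_diag_def by (simp add: scalar_prod_def)
    also have "\<dots> = (\<Sum>j = 0..<k. if i = j then v $ j / lam j else 0)"
      by (rule sum.cong) auto
    also have "\<dots> = v $ i / lam i" using that by simp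
    finally show ?thesis .
  qed
  have dimM: "dim_vec (?M *\<^sub>v v) = k" unfolding mat_diag_def by simp
  have "vnorm (?M *\<^sub>v v) = sqrt (\<Sum>i = 0..<k. (v $ i / lam i)\<^sup>2)"
    unfolding vnorm_L2 L2_set_def dimM using c by simp
  also have "\<dots> \<le> sqrt (\<Sum>i = 0..<k. (v $ i / L0)\<^sup>2)"
  proof (intro real_sqrt_le_mono sum_mono)
    fix i assume i: "i \<in> {0..<k}"
    have li: "lam i \<ge> L0" using lb i by auto
    have "\<bar>v $ i\<bar> / lam i \<le> \<bar>v $ i\<bar> / L0"
      by (rule divide_left_mono) (use li L0 in auto)
    then have "\<bar>v $ i / lam i\<bar> \<le> \<bar>v $ i / L0\<bar>"
      using li L0 by (simp add: abs_divide)
    then show "(v $ i / lam i)\<^sup>2 \<le> (v $ i / L0)\<^sup>2" by (simp only: abs_le_square_iff)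
  qed
  also have "\<dots> = (1 / L0) * vnorm v"
  proof -
    have "(\<Sum>i = 0..<k. (v $ i / L0)\<^sup>2) = (\<Sum>i = 0..<k. (v $ i)\<^sup>2) / L0\<^sup>2"
      by (simp add: power_divide sum_divide_distrib)
    then have "sqrt (\<Sum>i = 0..<k. (v $ i / L0)\<^sup>2) = sqrt (\<Sum>i = 0..<k. (v $ i)\<^sup>2) / L0"
      using L0 by (simp add: real_sqrt_divide)
    then show ?thesis unfolding vnorm_L2 L2_set_def using v by simp
  qed
  finally show ?thesis .
qed


lemma vec_three:
  fixes a b c :: "real vec"
  assumes "a \<in> carrier_vec n" "b \<in> carrier_vec n" "c \<in> carrier_vec n"
  shows "vnorm a - vnorm b - vnorm c \<le> vnorm (a - b + c)"
proof -
  have e: "a = ((a - b + c) + b) - c" using assms by (intro eq_vecI) auto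
  have "vnorm a \<le> vnorm ((a - b + c) + b) + vnorm c"
    by (subst e, rule vnorm_minus) (use assms in auto)
  also have "vnorm ((a - b + c) + b) \<le> vnorm (a - b + c) + vnorm b"
    by (rule vnorm_add) (use assms in auto)
  finally show ?thesis by simp
qed



lemma vec_two:
  fixes a c :: "real vec"
  assumes "a \<in> carrier_vec n" "c \<in> carrier_vec n"
  shows "vnorm a - vnorm c \<le> vnorm (a + c)"
proof -
  have e: "a = (a + c) - c" using assms by (intro eq_vecI) auto
  have "vnorm a \<le> vnorm (a + c) + vnorm c"
    by (subst e, rule vnorm_minus) (use assms in auto)
  then show ?thesis by simp
qed



lemma inv_bound:
  fixes B :: "real mat"
  assumes B: "B \<in> carrier_mat n n" and m: "m > 0"
    and lb: "\<forall>v\<in>carrier_vec n. m * vnorm v \<le> vnorm (B *\<^sub>v v)"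
  shows "det B \<noteq> 0" "\<forall>v\<in>carrier_vec n. vnorm (minv B *\<^sub>v v) \<le> (1 / m) * vnorm v"
proof -
  show d: "det B \<noteq> 0" by (rule det_nz_of_lower[OF B m lb])
  note mi = minv_props[OF B d]
  show "\<forall>v\<in>carrier_vec n. vnorm (minv B *\<^sub>v v) \<le> (1 / m) * vnorm v"
  proof
    fix v :: "real vec" assume v: "v \<in> carrier_vec n"
    have "B *\<^sub>v (minv B *\<^sub>v v) = (B * minv B) *\<^sub>v v" using B mi(1) v by simp
    also have "\<dots> = v" using mi(2) v by simp
    finally have "m * vnorm (minv B *\<^sub>v v) \<le> vnorm v" using lb mi(1) v by (metis mult_mat_vec_carrier)
    then show "vnorm (minv B *\<^sub>v v) \<le> (1 / m) * vnorm v" using m by (simp add: field_simps)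
  qed
qed




lemma step_alg:
  fixes L Li G B P0 P1 R1 Ri Z1 Pi1 :: "real mat"
  assumes c: "L \<in> carrier_mat k k" "Li \<in> carrier_mat k k" "G \<in> carrier_mat k k" "B \<in> carrier_mat k k"
    "P0 \<in> carrier_mat k k" "P1 \<in> carrier_mat k k" "R1 \<in> carrier_mat k k" "Ri \<in> carrier_mat k k"
    "Z1 \<in> carrier_mat k k" "Pi1 \<in> carrier_mat k k"
    and LLi: "L * Li = 1\<^sub>m k" and LiL: "Li * L = 1\<^sub>m k" and GB: "G * B = 1\<^sub>m k" and RRi: "R1 * Ri = 1\<^sub>m k"
    and PiP: "Pi1 * P1 = 1\<^sub>m k" and rel: "P1 * R1 = L * B * P0"
  shows "L * P1 - b \<cdot>\<^sub>m (P0 * Ri) + Z1 = L * (1\<^sub>m k - b \<cdot>\<^sub>m (Li * G * Li) + Li * Z1 * Pi1) * P1"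
proof -
  note d = c[THEN carrier_matD(1)] c[THEN carrier_matD(2)]
  have rel': "P1 * (R1 * M) = L * (B * (P0 * M))" if "dim_row M = k" for M
    using arg_cong[OF rel, of "\<lambda>X. X * M"] that by (simp add: dd_simps d)
  have x1: "G * (Li * P1) = P0 * Ri"
  proof -
    have "G * (Li * P1) = G * (Li * (P1 * (R1 * Ri)))" using RRi d by (simp add: dd_simps)
    also have "\<dots> = G * (Li * (L * (B * (P0 * Ri))))" using rel' d by simp
    also have "\<dots> = P0 * Ri" using d by (simp add: dd_cancel[OF LiL] dd_cancel[OF GB])
    finally show ?thesis .
  qed
  show ?thesis using d x1
    by (simp add: dd_simps dd_cancel[OF LLi] dd_cancel[OF PiP] LLi PiP)
qed



lemma K_a:
  fixes L B C P0 Pi0 P1 Pi1 R1 Q1 :: "real mat"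
  assumes c: "L \<in> carrier_mat k k" "B \<in> carrier_mat k k" "C \<in> carrier_mat k k"
    "P0 \<in> carrier_mat k k" "Pi0 \<in> carrier_mat k k" "P1 \<in> carrier_mat k k" "Pi1 \<in> carrier_mat k k"
    "R1 \<in> carrier_mat k k" "Q1 \<in> carrier_mat n k"
    and rel: "P1 * R1 = L * B * P0" and PPi0: "P0 * Pi0 = 1\<^sub>m k" and PiP1: "Pi1 * P1 = 1\<^sub>m k"
  shows "L * B * C = P1 * R1 * Pi0 * C" "Q1 * Pi1 * (L * B * C) = Q1 * R1 * Pi0 * C"
proof -
  note d = c[THEN carrier_matD(1)] c[THEN carrier_matD(2)]
  have rel': "P1 * (R1 * M) = L * (B * (P0 * M))" if "dim_row M = k" for M
    using arg_cong[OF rel, of "\<lambda>X. X * M"] that by (simp add: dd_simps d)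
  show e: "L * B * C = P1 * R1 * Pi0 * C" using d rel' by (simp add: dd_simps dd_cancel[OF PPi0])
  show "Q1 * Pi1 * (L * B * C) = Q1 * R1 * Pi0 * C" unfolding e using d by (simp add: dd_simps dd_cancel[OF PiP1])
qed



lemma K_c:
  fixes C P1 Pi1 R1 Ri Pi0 :: "real mat"
  assumes c: "C \<in> carrier_mat k k" "Pi0 \<in> carrier_mat k k" "P1 \<in> carrier_mat k k" "Pi1 \<in> carrier_mat k k"
    "R1 \<in> carrier_mat k k" "Ri \<in> carrier_mat k k"
    and RiR: "Ri * R1 = 1\<^sub>m k" and PiP1: "Pi1 * P1 = 1\<^sub>m k"
  shows "Ri * Pi1 * (P1 * R1 * Pi0 * C) = Pi0 * C"
proof -
  note d = c[THEN carrier_matD(1)] c[THEN carrier_matD(2)]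
  show ?thesis using d by (simp add: dd_simps dd_cancel[OF RiR] dd_cancel[OF PiP1])
qed



lemma K_dist:
  fixes Lr Q1 Q0 W Ri Pi C :: "real mat"
  assumes c: "Lr \<in> carrier_mat n n" "Q1 \<in> carrier_mat n k" "Q0 \<in> carrier_mat n k" "W \<in> carrier_mat n k"
    "Ri \<in> carrier_mat k k" "Pi \<in> carrier_mat k k" "C \<in> carrier_mat k k"
  shows "(Lr * Q1 - b \<cdot>\<^sub>m (Q0 * Ri) + W) * Pi * C
       = Lr * (Q1 * Pi * C) - b \<cdot>\<^sub>m (Q0 * (Ri * Pi * C)) + W * Pi * C"
proof -
  note d = c[THEN carrier_matD(1)] c[THEN carrier_matD(2)]
  show ?thesis using d by (simp add: dd_simps)
qed



lemma K_0:
  fixes Lr Q0 W Pi C :: "real mat"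
  assumes c: "Lr \<in> carrier_mat n n" "Q0 \<in> carrier_mat n k" "W \<in> carrier_mat n k"
    "Pi \<in> carrier_mat k k" "C \<in> carrier_mat k k"
  shows "((1/2) \<cdot>\<^sub>m (Lr * Q0) + W) * Pi * C = (1/2) \<cdot>\<^sub>m (Lr * (Q0 * Pi * C)) + W * Pi * C"
proof -
  note d = c[THEN carrier_matD(1)] c[THEN carrier_matD(2)]
  show ?thesis using d by (simp add: dd_simps)
qed



lemma rel0_alg:
  fixes L Li Z P Pi :: "real mat"
  assumes c: "L \<in> carrier_mat k k" "Li \<in> carrier_mat k k" "Z \<in> carrier_mat k k" "P \<in> carrier_mat k k"
    "Pi \<in> carrier_mat k k" and LLi: "L * Li = 1\<^sub>m k" and PiP: "Pi * P = 1\<^sub>m k"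
  shows "L * ((1/2) \<cdot>\<^sub>m 1\<^sub>m k + Li * Z * Pi) * P = (1/2) \<cdot>\<^sub>m (L * P) + Z"
proof -
  note d = c[THEN carrier_matD(1)] c[THEN carrier_matD(2)]
  show ?thesis using d by (simp add: dd_simps dd_cancel[OF LLi] dd_cancel[OF PiP] LLi PiP)
qed





theorem lemma2:
  fixes d k :: nat and \<epsilon> \<beta> :: real and A U :: "real mat" and lam :: "nat \<Rightarrow> real"
    and X R Xi :: "nat \<Rightarrow> real mat"
  assumes dk: "d > k" "k \<ge> 1"
    and eps: "0 < \<epsilon>" "\<epsilon> < 1"
    and A_carrier: "A \<in> carrier_mat d d"
    and A_sym: "transpose_mat A = A"
    and A_psd: "\<forall>x \<in> carrier_vec d. x \<bullet> (A *\<^sub>v x) \<ge> 0"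
    and U_carrier: "U \<in> carrier_mat d d"
    and U_orth: "transpose_mat U * U = 1\<^sub>m d"
    and U_eig: "\<forall>i < d. A *\<^sub>v col U i = lam i \<cdot>\<^sub>v col U i"
    and lam_sorted: "\<forall>i j. i \<le> j \<longrightarrow> j < d \<longrightarrow> lam j \<le> lam i"
    and lam_nonneg: "lam (d - 1) \<ge> 0"
    and gap: "lam (k - 1) > lam k"
    and beta_pos: "\<beta> > 0"
    and beta_gap: "lam (k - 1) > 2 * sqrt \<beta>" "2 * sqrt \<beta> \<ge> lam k"
    and X0: "X 0 \<in> stiefel d k"
    and cos0: "cos (theta_k (Ufst U k) (X 0)) > 0"
    and Xi_carrier: "\<forall>t. Xi t \<in> carrier_mat d k"
    and QR1: "is_QR ((1/2) \<cdot>\<^sub>m (A * X 0) + Xi 0) (X 1) (R 1)"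
    and QRstep: "\<forall>t. is_QR (A * X (Suc t) - \<beta> \<cdot>\<^sub>m (X t * minv (R (Suc t))) + Xi (Suc t))
                           (X (Suc (Suc t))) (R (Suc (Suc t)))"
    and pert_rest: "\<forall>t. spec_norm (transpose_mat (Urest U k) * Xi t)
                         \<le> (1/32) * (lam (k - 1) - 2 * sqrt \<beta>) * \<epsilon>"
    and pert_fst: "\<forall>t. spec_norm (transpose_mat (Ufst U k) * Xi t)
                         \<le> (1/32) * (lam (k - 1) - 2 * sqrt \<beta>) * cos (theta_k (Ufst U k) (X t))"
  shows "\<forall>t. Hm U k X t =
      poly_mat (d - k) (pP \<beta> t) (Lrest lam d k) * Hm U k X 0 * minv (Cm U lam k \<beta> X Xi t)
      + msum (d - k) k
          (\<lambda>s. poly_mat (d - k) (qP \<beta> s) (Lrest lam d k) * Psim U k X Xi (t - 1 - s)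
               * Cm U lam k \<beta> X Xi (t - 1 - s) * minv (Cm U lam k \<beta> X Xi t)) t"
proof -
  have kd: "k < d" "0 < k" using dk by auto
  define sb where "sb = sqrt \<beta>"
  define L0 where "L0 = lam (k - 1)"
  have sb0: "sb > 0" using beta_pos unfolding sb_def by simp
  have sb2: "sb * sb = \<beta>" using beta_pos unfolding sb_def by simp
  have L0gt: "L0 > 2 * sb" using beta_gap(1) unfolding L0_def sb_def by simp
  have L0pos: "L0 > 0" using L0gt sb0 by simp
  have lam_ge: "\<forall>i<k. lam i \<ge> L0"
    unfolding L0_def using lam_sorted kd by auto
  have lam_pos: "\<forall>i<k. lam i > 0" using lam_ge L0pos by force
  define L where "L = Lfst lam k"
  define Li where "Li = mat_diag k (\<lambda>i. 1 / lam i)"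
  have Lc: "L \<in> carrier_mat k k" unfolding L_def Lfst_def by simp
  have Lic: "Li \<in> carrier_mat k k" unfolding Li_def by simp
  have LLi: "L * Li = 1\<^sub>m k"
    unfolding L_def Lfst_def Li_def mat_diag_diag
    by (rule eq_matI) (use lam_pos in \<open>auto simp: mat_diag_def\<close>)
  have LiL: "Li * L = 1\<^sub>m k"
    unfolding L_def Lfst_def Li_def mat_diag_diag
    by (rule eq_matI) (use lam_pos in \<open>auto simp: mat_diag_def\<close>)
  have minvL: "minv (Lfst lam k) = Li" using minv_unique[OF Lc Lic LLi] unfolding L_def .
  have detL: "det L \<noteq> 0" using det_mult[OF Lc Lic] LLi by auto
  have Li_bound: "\<forall>v\<in>carrier_vec k. vnorm (Li *\<^sub>v v) \<le> (1 / L0) * vnorm v"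
    unfolding Li_def using diag_inv_bound[OF lam_ge L0pos] by blast

  define n where "n = d - k"
  define UfT where "UfT = transpose_mat (Ufst U k)"
  define UrT where "UrT = transpose_mat (Urest U k)"
  define Lr where "Lr = Lrest lam d k"
  have UfTc: "UfT \<in> carrier_mat k d" unfolding UfT_def Ufst_def using U_carrier by auto
  have UrTc: "UrT \<in> carrier_mat n d" unfolding UrT_def Urest_def n_def using U_carrier by auto
  have Lrc: "Lr \<in> carrier_mat n n" unfolding Lr_def Lrest_def n_def by simp
  have eigF: "UfT * A = L * UfT"
  proof -
    have "Ufst U k = mat d k (\<lambda>(i,j). U $$ (i, j + 0))" unfolding Ufst_def using U_carrier by simp
    moreover have "L = mat_diag k (\<lambda>i. lam (i + 0))" unfolding L_def Lfst_def by simp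
    ultimately show ?thesis unfolding UfT_def
      using eig_T[OF A_carrier A_sym U_carrier U_eig, of k 0] kd by simp
  qed
  have eigR: "UrT * A = Lr * UrT"
  proof -
    have "Urest U k = mat d (d - k) (\<lambda>(i,j). U $$ (i, j + k))" unfolding Urest_def using U_carrier by simp
    moreover have "Lr = mat_diag (d - k) (\<lambda>i. lam (i + k))" unfolding Lr_def Lrest_def by simp
    ultimately show ?thesis unfolding UrT_def
      using eig_T[OF A_carrier A_sym U_carrier U_eig, of "d - k" k] kd by simp
  qed

  have Xic: "\<And>t. Xi t \<in> carrier_mat d k" using Xi_carrier by auto
  have X0c: "X 0 \<in> carrier_mat d k" using X0 unfolding stiefel_def by auto
  have QR1': "X 1 \<in> carrier_mat d k" "R 1 \<in> carrier_mat k k" "(1/2) \<cdot>\<^sub>m (A * X 0) + Xi 0 = X 1 * R 1"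
    using QR1 Xic[of 0] unfolding is_QR_def by auto
  have QRS': "X (Suc (Suc t)) \<in> carrier_mat d k" "R (Suc (Suc t)) \<in> carrier_mat k k"
     "A * X (Suc t) - \<beta> \<cdot>\<^sub>m (X t * minv (R (Suc t))) + Xi (Suc t) = X (Suc (Suc t)) * R (Suc (Suc t))" for t
    using QRstep[rule_format, of t] Xic[of "Suc t"] unfolding is_QR_def by auto
  have Xc: "X t \<in> carrier_mat d k" for t
  proof (cases t)
    case 0 then show ?thesis using X0c by simp
  next
    case (Suc s) then show ?thesis using QR1'(1) QRS'(1) by (cases s) auto
  qed
  have Rc: "R (Suc t) \<in> carrier_mat k k" for t
    using QR1'(2) QRS'(2) by (cases t) auto

  define P where "P t = UfT * X t" for t
  define Q where "Q t = UrT * X t" for t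
  define Z where "Z t = UfT * Xi t" for t
  define W where "W t = UrT * Xi t" for t
  have Pc: "P t \<in> carrier_mat k k" for t unfolding P_def using UfTc Xc by auto
  have Qc: "Q t \<in> carrier_mat n k" for t unfolding Q_def using UrTc Xc by auto
  have Zc: "Z t \<in> carrier_mat k k" for t unfolding Z_def using UfTc Xic by auto
  have Wc: "W t \<in> carrier_mat n k" for t unfolding W_def using UrTc Xic by auto
  have Pdim: "dim_row (P t) = k" "dim_col (P t) = k" for t using carrier_matD[OF Pc[of t]] by blast+
  have Zdim: "dim_row (Z t) = k" "dim_col (Z t) = k" for t using carrier_matD[OF Zc[of t]] by blast+

  have PR0: "P 1 * R 1 = (1/2) \<cdot>\<^sub>m (L * P 0) + Z 0"
  proof -
    have "P 1 * R 1 = UfT * (X 1 * R 1)" unfolding P_def using UfTc QR1'(1,2) by (rule assoc_mult_mat)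
    also have "\<dots> = UfT * ((1/2) \<cdot>\<^sub>m (A * X 0) + Xi 0)" using QR1'(3) by simp
    also have "\<dots> = (1/2) \<cdot>\<^sub>m (L * P 0) + Z 0"
      unfolding P_def Z_def by (rule proj0[OF UfTc A_carrier Lc eigF X0c Xic])
    finally show ?thesis .
  qed
  have QR0: "Q 1 * R 1 = (1/2) \<cdot>\<^sub>m (Lr * Q 0) + W 0"
  proof -
    have "Q 1 * R 1 = UrT * (X 1 * R 1)" unfolding Q_def using UrTc QR1'(1,2) by (rule assoc_mult_mat)
    also have "\<dots> = UrT * ((1/2) \<cdot>\<^sub>m (A * X 0) + Xi 0)" using QR1'(3) by simp
    also have "\<dots> = (1/2) \<cdot>\<^sub>m (Lr * Q 0) + W 0"
      unfolding Q_def W_def by (rule proj0[OF UrTc A_carrier Lrc eigR X0c Xic])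
    finally show ?thesis .
  qed
  have PRS: "P (Suc (Suc t)) * R (Suc (Suc t)) = L * P (Suc t) - \<beta> \<cdot>\<^sub>m (P t * minv (R (Suc t))) + Z (Suc t)"
    if "minv (R (Suc t)) \<in> carrier_mat k k" for t
  proof -
    have "P (Suc (Suc t)) * R (Suc (Suc t)) = UfT * (X (Suc (Suc t)) * R (Suc (Suc t)))"
      unfolding P_def using UfTc QRS'(1,2) by (rule assoc_mult_mat)
    also have "\<dots> = UfT * (A * X (Suc t) - \<beta> \<cdot>\<^sub>m (X t * minv (R (Suc t))) + Xi (Suc t))" using QRS'(3) by simp
    also have "\<dots> = L * P (Suc t) - \<beta> \<cdot>\<^sub>m (P t * minv (R (Suc t))) + Z (Suc t)"
      unfolding P_def Z_def by (rule projS[OF UfTc A_carrier Lc eigF Xc Xc Xic that])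
    finally show ?thesis .
  qed
  have QRS: "Q (Suc (Suc t)) * R (Suc (Suc t)) = Lr * Q (Suc t) - \<beta> \<cdot>\<^sub>m (Q t * minv (R (Suc t))) + W (Suc t)"
    if "minv (R (Suc t)) \<in> carrier_mat k k" for t
  proof -
    have "Q (Suc (Suc t)) * R (Suc (Suc t)) = UrT * (X (Suc (Suc t)) * R (Suc (Suc t)))"
      unfolding Q_def using UrTc QRS'(1,2) by (rule assoc_mult_mat)
    also have "\<dots> = UrT * (A * X (Suc t) - \<beta> \<cdot>\<^sub>m (X t * minv (R (Suc t))) + Xi (Suc t))" using QRS'(3) by simp
    also have "\<dots> = Lr * Q (Suc t) - \<beta> \<cdot>\<^sub>m (Q t * minv (R (Suc t))) + W (Suc t)"
      unfolding Q_def W_def by (rule projS[OF UrTc A_carrier Lrc eigR Xc Xc Xic that])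
    finally show ?thesis .
  qed

  define E where "E t = Em U lam k X Xi t" for t
  have E_eq: "E t = Li * Z t * minv (P t)" for t
    unfolding E_def Em_def minvL Z_def P_def UfT_def ..
  define G where "G t = Gm U lam k \<beta> X Xi t" for t
  define B where "B t = (case t of 0 \<Rightarrow> (1/2) \<cdot>\<^sub>m 1\<^sub>m k + E 0
                      | Suc s \<Rightarrow> 1\<^sub>m k - \<beta> \<cdot>\<^sub>m (Li * G s * Li) + E (Suc s))" for t
  have G_eq: "G t = minv (B t)" for t
    by (cases t) (simp_all add: G_def B_def E_def minvL)

  define cd where "cd = (L0 - 2 * sb) / (32 * L0)"
  define g where "g = 1 / (1/2 - cd)"
  have cd0: "0 < cd" unfolding cd_def using L0gt L0pos by simp
  have cd1: "cd < 1/32" unfolding cd_def using L0pos sb0 by (simp add: divide_less_eq)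
  have g0: "g > 0" unfolding g_def using cd1 by simp
  have ginv: "1 / g = 1/2 - cd" unfolding g_def by simp
  have key: "\<beta> * g / L0^2 \<le> 1/2"
  proof -
    have g_eq: "g = 32 * L0 / (15 * L0 + 2 * sb)"
      unfolding g_def cd_def using L0pos sb0 by (simp add: field_simps)
    have sq: "L0 * L0 > (2 * sb) * (2 * sb)" using L0gt sb0 by (intro mult_strict_mono) auto
    have sl: "sb * L0 > sb * (2 * sb)" using L0gt sb0 by simp
    have ineq: "64 * (sb * sb) \<le> L0 * (15 * L0 + 2 * sb)" using sq sl by (simp add: algebra_simps)
    have pos: "L0 * (15 * L0 + 2 * sb) > 0" using L0pos sb0 by simp
    have den: "15 * L0 + 2 * sb > 0" using L0pos sb0 by simp
    have bg: "\<beta> * g = (32 * L0 * (sb * sb)) / (15 * L0 + 2 * sb)" unfolding g_eq sb2[symmetric] by simp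
    have m: "L0 * (64 * (sb * sb)) \<le> L0 * (L0 * (15 * L0 + 2 * sb))"
      by (rule mult_left_mono[OF ineq]) (use L0pos in simp)
    have "32 * L0 * (sb * sb) \<le> (L0^2 / 2) * (15 * L0 + 2 * sb)" using m by (simp add: power2_eq_square algebra_simps)
    then have "\<beta> * g \<le> L0^2 / 2" unfolding bg by (simp add: pos_divide_le_eq[OF den])
    moreover have "L0^2 > 0" using L0pos by simp
    ultimately show ?thesis by (simp add: pos_divide_le_eq)
  qed

  have Ebound: "\<forall>v\<in>carrier_vec k. vnorm (E t *\<^sub>v v) \<le> cd * vnorm v" if dP: "det (P t) \<noteq> 0" for t
  proof
    fix v :: "real vec" assume v: "v \<in> carrier_vec k"
    note mi = minv_props[OF Pc dP]
    define w where "w = minv (P t) *\<^sub>v v"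
    have wc: "w \<in> carrier_vec k" unfolding w_def using mi(1) v by simp
    have "P t *\<^sub>v w = (P t * minv (P t)) *\<^sub>v v"
      unfolding w_def using assoc_mult_mat_vec[OF Pc mi(1) v] by simp
    then have Pw: "P t *\<^sub>v w = v" using mi(2) v by simp
    define \<sigma> where "\<sigma> = sigma_min (P t)"
    have \<sigma>0: "\<sigma> \<ge> 0" unfolding \<sigma>_def using sigma_min_nonneg[of "P t"] Pdim kd by auto
    have \<sigma>w: "\<sigma> * vnorm w \<le> vnorm v" using sigma_min_bound[of w "P t"] wc Pdim Pw unfolding \<sigma>_def by auto
    have th: "theta_k (Ufst U k) (X t) = arccos \<sigma>" unfolding theta_k_def \<sigma>_def P_def UfT_def ..
    define c' where "c' = (1/32) * (L0 - 2 * sb)"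
    have c'0: "c' \<ge> 0" unfolding c'_def using L0gt by simp
    have sp: "spec_norm (Z t) \<le> c' * cos (arccos \<sigma>)"
      using pert_fst[rule_format, of t] unfolding th Z_def UfT_def c'_def L0_def sb_def .
    have "vnorm (Z t *\<^sub>v w) \<le> spec_norm (Z t) * vnorm w" using spec_norm_bound[of w "Z t"] wc Zdim by auto
    also have "\<dots> \<le> c' * cos (arccos \<sigma>) * vnorm w" using sp vnorm_nonneg[of w] by (rule mult_right_mono)
    also have "\<dots> \<le> c' * \<sigma> * vnorm w"
      using cos_arccos_le[OF \<sigma>0] c'0 vnorm_nonneg[of w] by (intro mult_right_mono mult_left_mono) auto
    also have "\<dots> \<le> c' * vnorm v" using \<sigma>w c'0 by (simp add: mult.assoc mult_left_mono)
    finally have Zw: "vnorm (Z t *\<^sub>v w) \<le> c' * vnorm v" .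
    have "E t *\<^sub>v v = (Li * Z t) *\<^sub>v (minv (P t) *\<^sub>v v)"
      unfolding E_eq by (rule assoc_mult_mat_vec[of _ k k _ k]) (use Lic Zc mi(1) v in auto)
    also have "\<dots> = Li *\<^sub>v (Z t *\<^sub>v w)"
      unfolding w_def by (rule assoc_mult_mat_vec[of _ k k _ k]) (use Lic Zc mi(1) v in auto)
    finally have Ev: "E t *\<^sub>v v = Li *\<^sub>v (Z t *\<^sub>v w)" .
    have "vnorm (E t *\<^sub>v v) \<le> (1 / L0) * vnorm (Z t *\<^sub>v w)"
      unfolding Ev using bspec[OF Li_bound mult_mat_vec_carrier[OF Zc wc]] by simp
    also have "\<dots> \<le> (1 / L0) * (c' * vnorm v)" using Zw L0pos by (simp add: divide_right_mono)
    also have "\<dots> = cd * vnorm v" unfolding cd_def c'_def by simp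
    finally show "vnorm (E t *\<^sub>v v) \<le> cd * vnorm v" .
  qed

  have Bgood: "det (B t) \<noteq> 0 \<and> B t \<in> carrier_mat k k \<and> G t \<in> carrier_mat k k \<and> G t * B t = 1\<^sub>m k
      \<and> (\<forall>v\<in>carrier_vec k. vnorm (G t *\<^sub>v v) \<le> g * vnorm v)"
    if Bc: "B t \<in> carrier_mat k k" and lb: "\<forall>v\<in>carrier_vec k. (1/g) * vnorm v \<le> vnorm (B t *\<^sub>v v)" for t
  proof -
    have g1: "1 / g > 0" using g0 by simp
    note ib = inv_bound[OF Bc g1 lb]
    note mi = minv_props[OF Bc ib(1)]
    show ?thesis using ib mi Bc g0 unfolding G_eq by simp
  qed

  have Inv: "det (P t) \<noteq> 0 \<and> B t \<in> carrier_mat k k \<and> det (B t) \<noteq> 0 \<and> G t \<in> carrier_mat k k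
      \<and> G t * B t = 1\<^sub>m k \<and> (\<forall>v\<in>carrier_vec k. vnorm (G t *\<^sub>v v) \<le> g * vnorm v)
      \<and> P (Suc t) * R (Suc t) = L * B t * P t \<and> det (R (Suc t)) \<noteq> 0 \<and> det (P (Suc t)) \<noteq> 0" for t
  proof (induction t)
    case 0
    have dP: "det (P 0) \<noteq> 0"
    proof -
      define \<sigma> where "\<sigma> = sigma_min (P 0)"
      have \<sigma>0: "\<sigma> \<ge> 0" unfolding \<sigma>_def using sigma_min_nonneg[of "P 0"] Pdim kd by auto
      have th: "theta_k (Ufst U k) (X 0) = arccos \<sigma>" unfolding theta_k_def \<sigma>_def P_def UfT_def ..
      have \<sigma>p: "\<sigma> > 0" using cos_arccos_pos[OF \<sigma>0] cos0 unfolding th by simp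
      have "\<forall>v\<in>carrier_vec k. \<sigma> * vnorm v \<le> vnorm (P 0 *\<^sub>v v)"
        using sigma_min_bound[of _ "P 0"] Pdim unfolding \<sigma>_def by auto
      then show ?thesis by (rule det_nz_of_lower[OF Pc \<sigma>p])
    qed
    note mi = minv_props[OF Pc dP]
    have Ec: "E 0 \<in> carrier_mat k k" unfolding E_eq using Lic Zc mi(1) by auto
    have B0: "B 0 = (1/2) \<cdot>\<^sub>m 1\<^sub>m k + E 0" unfolding B_def by simp
    have Bc: "B 0 \<in> carrier_mat k k" unfolding B0 using Ec by simp
    have lb: "\<forall>v\<in>carrier_vec k. (1/g) * vnorm v \<le> vnorm (B 0 *\<^sub>v v)"
    proof
      fix v :: "real vec" assume v: "v \<in> carrier_vec k"
      have Bv: "B 0 *\<^sub>v v = (1/2) \<cdot>\<^sub>v v + E 0 *\<^sub>v v"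
        unfolding B0 using Ec v by (subst add_mult_distrib_mat_vec[of _ k k]) auto
      have "(1/2) * vnorm v - cd * vnorm v \<le> vnorm ((1/2) \<cdot>\<^sub>v v) - vnorm (E 0 *\<^sub>v v)"
        using Ebound[OF dP] v by (simp add: vnorm_smult)
      also have "\<dots> \<le> vnorm (B 0 *\<^sub>v v)" unfolding Bv by (rule vec_two) (use v Ec in auto)
      finally show "(1/g) * vnorm v \<le> vnorm (B 0 *\<^sub>v v)" unfolding ginv by (simp add: left_diff_distrib)
    qed
    note bg = Bgood[OF Bc lb]
    have rel: "P 1 * R 1 = L * B 0 * P 0"
      unfolding PR0 B0 E_eq by (rule rel0_alg[symmetric, OF Lc Lic Zc Pc mi(1) LLi mi(3)])
    have "det (P (Suc 0)) * det (R (Suc 0)) = det (P (Suc 0) * R (Suc 0))"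
      using det_mult[OF Pc[of "Suc 0"] Rc[of 0]] by simp
    also have "\<dots> = det (L * B 0 * P 0)" using rel by simp
    also have "\<dots> = det L * det (B 0) * det (P 0)"
      using det_mult[OF mult_carrier_mat[OF Lc Bc] Pc[of 0]] det_mult[OF Lc Bc] by simp
    finally have "det (P (Suc 0)) * det (R (Suc 0)) \<noteq> 0" using detL bg dP by simp
    then show ?case using dP Bc bg rel by simp
  next
    case (Suc t)
    have dP: "det (P (Suc t)) \<noteq> 0" using Suc by simp
    note mi = minv_props[OF Pc dP]
    have dR: "det (R (Suc t)) \<noteq> 0" using Suc by simp
    note mr = minv_props[OF Rc dR]
    have Gc: "G t \<in> carrier_mat k k" and GB: "G t * B t = 1\<^sub>m k" and Gb: "\<forall>v\<in>carrier_vec k. vnorm (G t *\<^sub>v v) \<le> g * vnorm v"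
      and relt: "P (Suc t) * R (Suc t) = L * B t * P t" and Bct: "B t \<in> carrier_mat k k" using Suc by auto
    have Ec: "E (Suc t) \<in> carrier_mat k k" unfolding E_eq using Lic Zc mi(1) by auto
    define M where "M = Li * G t * Li"
    have Mc: "M \<in> carrier_mat k k" unfolding M_def using Lic Gc by auto
    have B1: "B (Suc t) = 1\<^sub>m k - \<beta> \<cdot>\<^sub>m M + E (Suc t)" unfolding B_def M_def by simp
    have Bc: "B (Suc t) \<in> carrier_mat k k" unfolding B1 using Ec by simp
    have lb: "\<forall>v\<in>carrier_vec k. (1/g) * vnorm v \<le> vnorm (B (Suc t) *\<^sub>v v)"
    proof
      fix v :: "real vec" assume v: "v \<in> carrier_vec k"
      have sm: "(\<beta> \<cdot>\<^sub>m M) *\<^sub>v v = \<beta> \<cdot>\<^sub>v (M *\<^sub>v v)"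
        by (intro eq_vecI) (use Mc v in \<open>auto simp: scalar_prod_def sum_distrib_left mult.assoc\<close>)
      have Bv: "B (Suc t) *\<^sub>v v = v - \<beta> \<cdot>\<^sub>v (M *\<^sub>v v) + E (Suc t) *\<^sub>v v"
        unfolding B1 using Ec Mc v sm
        by (simp add: add_mult_distrib_mat_vec[of _ k k] minus_mult_distrib_mat_vec[of _ k k] minus_carrier_mat)
      have Mv: "vnorm (M *\<^sub>v v) \<le> (1 / L0) * g * (1 / L0) * vnorm v"
      proof -
        have "M *\<^sub>v v = (Li * G t) *\<^sub>v (Li *\<^sub>v v)" unfolding M_def
          by (rule assoc_mult_mat_vec[OF mult_carrier_mat[OF Lic Gc] Lic v])
        also have "\<dots> = Li *\<^sub>v (G t *\<^sub>v (Li *\<^sub>v v))"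
          by (rule assoc_mult_mat_vec[OF Lic Gc mult_mat_vec_carrier[OF Lic v]])
        finally have "M *\<^sub>v v = Li *\<^sub>v (G t *\<^sub>v (Li *\<^sub>v v))" .
        moreover have "vnorm (Li *\<^sub>v (G t *\<^sub>v (Li *\<^sub>v v))) \<le> (1 / L0) * vnorm (G t *\<^sub>v (Li *\<^sub>v v))"
          using bspec[OF Li_bound mult_mat_vec_carrier[OF Gc mult_mat_vec_carrier[OF Lic v]]] by simp
        moreover have "vnorm (G t *\<^sub>v (Li *\<^sub>v v)) \<le> g * vnorm (Li *\<^sub>v v)" using bspec[OF Gb mult_mat_vec_carrier[OF Lic v]] by simp
        moreover have "vnorm (Li *\<^sub>v v) \<le> (1 / L0) * vnorm v" using bspec[OF Li_bound v] by simp
        ultimately show ?thesis using L0pos g0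
          by (smt (verit, ccfv_SIG) mult.assoc mult_left_mono divide_nonneg_nonneg)
      qed
      have "vnorm v - \<beta> * ((1 / L0) * g * (1 / L0) * vnorm v) - cd * vnorm v
          \<le> vnorm v - vnorm (\<beta> \<cdot>\<^sub>v (M *\<^sub>v v)) - vnorm (E (Suc t) *\<^sub>v v)"
      proof -
        have e1: "vnorm (E (Suc t) *\<^sub>v v) \<le> cd * vnorm v" using bspec[OF Ebound[OF dP] v] .
        have "\<beta> * vnorm (M *\<^sub>v v) \<le> \<beta> * ((1 / L0) * g * (1 / L0) * vnorm v)"
          using Mv beta_pos by (intro mult_left_mono) auto
        then have e2: "vnorm (\<beta> \<cdot>\<^sub>v (M *\<^sub>v v)) \<le> \<beta> * ((1 / L0) * g * (1 / L0) * vnorm v)"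
          unfolding vnorm_smult using beta_pos by simp
        show ?thesis using e1 e2 by linarith
      qed
      also have "\<dots> \<le> vnorm (B (Suc t) *\<^sub>v v)" unfolding Bv by (rule vec_three) (use v Ec Mc in auto)
      finally have f: "vnorm v - \<beta> * ((1 / L0) * g * (1 / L0) * vnorm v) - cd * vnorm v \<le> vnorm (B (Suc t) *\<^sub>v v)" .
      have "\<beta> * ((1 / L0) * g * (1 / L0) * vnorm v) = (\<beta> * g / L0^2) * vnorm v"
        by (simp add: power2_eq_square)
      also have "\<dots> \<le> (1/2) * vnorm v" using key vnorm_nonneg[of v] by (rule mult_right_mono)
      finally have h: "\<beta> * ((1 / L0) * g * (1 / L0) * vnorm v) \<le> (1/2) * vnorm v" .
      have "(1/g) * vnorm v = (1/2) * vnorm v - cd * vnorm v" unfolding ginv by (simp add: left_diff_distrib)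
      then have "(1/g) * vnorm v \<le> vnorm v - \<beta> * ((1 / L0) * g * (1 / L0) * vnorm v) - cd * vnorm v"
        using h by linarith
      then show "(1/g) * vnorm v \<le> vnorm (B (Suc t) *\<^sub>v v)" using f by linarith
    qed
    note bg = Bgood[OF Bc lb]
    have rel: "P (Suc (Suc t)) * R (Suc (Suc t)) = L * B (Suc t) * P (Suc t)"
      unfolding PRS[OF mr(1)] B1 M_def E_eq
      by (rule step_alg[OF Lc Lic Gc Bct Pc Pc Rc mr(1) Zc mi(1) LLi LiL GB mr(2) mi(3) relt])
    have "det (P (Suc (Suc t))) * det (R (Suc (Suc t))) = det (P (Suc (Suc t)) * R (Suc (Suc t)))"
      using det_mult[OF Pc[of "Suc (Suc t)"] Rc[of "Suc t"]] by simp
    also have "\<dots> = det (L * B (Suc t) * P (Suc t))" using rel by simp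
    also have "\<dots> = det L * det (B (Suc t)) * det (P (Suc t))"
      using det_mult[OF mult_carrier_mat[OF Lc Bc] Pc[of "Suc t"]] det_mult[OF Lc Bc] by simp
    finally have "det (P (Suc (Suc t))) * det (R (Suc (Suc t))) \<noteq> 0" using detL bg dP by simp
    then show ?case using dP Bc bg rel by simp
  qed
  have dPt: "det (P t) \<noteq> 0" for t using Inv[of t] by simp
  have dRt: "det (R (Suc t)) \<noteq> 0" for t using Inv[of t] by simp
  have Bc: "B t \<in> carrier_mat k k" for t using Inv[of t] by simp
  have dB: "det (B t) \<noteq> 0" for t using Inv[of t] by simp
  have Gc: "G t \<in> carrier_mat k k" for t using Inv[of t] by simp
  have GB: "G t * B t = 1\<^sub>m k" for t using Inv[of t] by simp
  have rel: "P (Suc t) * R (Suc t) = L * B t * P t" for t using Inv[of t] by simp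
  define Pi where "Pi t = minv (P t)" for t
  have Pic: "Pi t \<in> carrier_mat k k" for t unfolding Pi_def using minv_props[OF Pc dPt] by simp
  have PPi: "P t * Pi t = 1\<^sub>m k" for t unfolding Pi_def using minv_props[OF Pc dPt] by simp
  have PiP: "Pi t * P t = 1\<^sub>m k" for t unfolding Pi_def using minv_props[OF Pc dPt] by simp
  define Ri where "Ri t = minv (R (Suc t))" for t
  have Ric: "Ri t \<in> carrier_mat k k" for t unfolding Ri_def using minv_props[OF Rc dRt] by simp
  have RRi: "R (Suc t) * Ri t = 1\<^sub>m k" for t unfolding Ri_def using minv_props[OF Rc dRt] by simp
  have RiR: "Ri t * R (Suc t) = 1\<^sub>m k" for t unfolding Ri_def using minv_props[OF Rc dRt] by simp
  define C where "C t = Cm U lam k \<beta> X Xi t" for t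
  have minvG: "minv (G t) = B t" for t by (rule minv_unique[OF Gc Bc GB])
  have C0: "C 0 = 1\<^sub>m k" unfolding C_def by simp
  have Gm_eq: "Gm U lam k \<beta> X Xi t = G t" for t unfolding G_def ..
  have CS: "C (Suc t) = L * B t * C t" for t
    unfolding C_def Cm.simps Gm_eq minvG L_def ..
  have CcdC: "C t \<in> carrier_mat k k \<and> det (C t) \<noteq> 0" for t
  proof (induction t)
    case 0 then show ?case unfolding C0 by simp
  next
    case (Suc t)
    then have Cc: "C t \<in> carrier_mat k k" and dC: "det (C t) \<noteq> 0" by auto
    have c: "C (Suc t) \<in> carrier_mat k k" unfolding CS by (rule mult_carrier_mat[OF mult_carrier_mat[OF Lc Bc] Cc])
    have "det (C (Suc t)) = det L * det (B t) * det (C t)"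
      unfolding CS using det_mult[OF mult_carrier_mat[OF Lc Bc] Cc] det_mult[OF Lc Bc] by simp
    then show ?case using c detL dB dC by simp
  qed
  have Cc: "C t \<in> carrier_mat k k" for t using CcdC by simp
  have dC: "det (C t) \<noteq> 0" for t using CcdC by simp
  define H where "H t = Q t * Pi t" for t
  define Ps where "Ps t = W t * Pi t" for t
  define K where "K t = H t * C t" for t
  have Hc: "H t \<in> carrier_mat n k" for t unfolding H_def by (rule mult_carrier_mat[OF Qc Pic])
  have Psc: "Ps t \<in> carrier_mat n k" for t unfolding Ps_def by (rule mult_carrier_mat[OF Wc Pic])
  have Kc: "K t \<in> carrier_mat n k" for t unfolding K_def by (rule mult_carrier_mat[OF Hc Cc])
  have PsCc: "Ps t * C t \<in> carrier_mat n k" for t by (rule mult_carrier_mat[OF Psc Cc])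
  have Kexp: "C (Suc t) = P (Suc t) * R (Suc t) * Pi t * C t" "K (Suc t) = Q (Suc t) * R (Suc t) * Pi t * C t" for t
  proof -
    note ka = K_a[OF Lc Bc Cc Pc Pic Pc Pic Rc Qc rel PPi PiP]
    show "C (Suc t) = P (Suc t) * R (Suc t) * Pi t * C t" unfolding CS by (rule ka(1))
    show "K (Suc t) = Q (Suc t) * R (Suc t) * Pi t * C t" unfolding K_def H_def CS by (rule ka(2))
  qed
  have K0: "K 0 = Q 0 * Pi 0 * C 0" unfolding K_def H_def ..
  have K1: "K 1 = (1/2) \<cdot>\<^sub>m (Lr * K 0) + Ps 0 * C 0"
  proof -
    have "K 1 = Q 1 * R 1 * Pi 0 * C 0" using Kexp(2)[of 0] by simp
    also have "\<dots> = ((1/2) \<cdot>\<^sub>m (Lr * Q 0) + W 0) * Pi 0 * C 0" unfolding QR0 ..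
    also have "\<dots> = (1/2) \<cdot>\<^sub>m (Lr * (Q 0 * Pi 0 * C 0)) + W 0 * Pi 0 * C 0"
      by (rule K_0[OF Lrc Qc Wc Pic Cc])
    finally show ?thesis unfolding K0 Ps_def .
  qed
  have KS: "K (Suc (Suc t)) = Lr * K (Suc t) - \<beta> \<cdot>\<^sub>m K t + Ps (Suc t) * C (Suc t)" for t
  proof -
    have "K (Suc (Suc t)) = Q (Suc (Suc t)) * R (Suc (Suc t)) * Pi (Suc t) * C (Suc t)" by (rule Kexp(2))
    also have "\<dots> = (Lr * Q (Suc t) - \<beta> \<cdot>\<^sub>m (Q t * Ri t) + W (Suc t)) * Pi (Suc t) * C (Suc t)"
      unfolding QRS[OF Ric[unfolded Ri_def]] Ri_def ..
    also have "\<dots> = Lr * (Q (Suc t) * Pi (Suc t) * C (Suc t)) - \<beta> \<cdot>\<^sub>m (Q t * (Ri t * Pi (Suc t) * C (Suc t)))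
        + W (Suc t) * Pi (Suc t) * C (Suc t)"
      by (rule K_dist[OF Lrc Qc Qc Wc Ric Pic Cc])
    also have "Ri t * Pi (Suc t) * C (Suc t) = Pi t * C t"
      unfolding Kexp(1) by (rule K_c[OF Cc Pic Pc Pic Rc Ric RiR PiP])
    also have "Q t * (Pi t * C t) = K t" unfolding K_def H_def using Qc Pic Cc by (simp add: assoc_mult_mat[of _ n k _ k _ k])
    finally show ?thesis unfolding K_def H_def Ps_def .
  qed
  have Kdim: "dim_row (K t) = n" "dim_col (K t) = k" for t using carrier_matD[OF Kc[of t]] by blast+
  have PsCdim: "dim_row (Ps t * C t) = n" "dim_col (Ps t * C t) = k" for t using carrier_matD[OF PsCc[of t]] by blast+
  have Lrdim: "dim_row Lr = n" "dim_col Lr = n" using carrier_matD[OF Lrc] by blast+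
  have Lr_diag: "Lr = mat_diag n (\<lambda>i. lam (i + k))" unfolding Lr_def Lrest_def n_def ..
  have Lr_mult: "(Lr * M) $$ (i,j) = lam (i + k) * M $$ (i,j)" if "M \<in> carrier_mat n k" "i < n" "j < k" for M i j
    using mat_diag_mult_left[OF that(1), of "\<lambda>i. lam (i + k)"] that unfolding Lr_diag by simp
  have Kent: "K t $$ (i,j) = poly (pP \<beta> t) (lam (i + k)) * K 0 $$ (i,j)
      + (\<Sum>s<t. poly (qP \<beta> s) (lam (i + k)) * (Ps (t - 1 - s) * C (t - 1 - s)) $$ (i,j))"
    if ij: "i < n" "j < k" for t i j
  proof (rule scalar_rec[where kk = "\<lambda>t. K t $$ (i,j)" and w = "\<lambda>s. (Ps s * C s) $$ (i,j)"])
    show "K 1 $$ (i,j) = lam (i + k) / 2 * K 0 $$ (i,j) + (Ps 0 * C 0) $$ (i,j)"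
      unfolding K1 using Lr_mult[OF Kc ij] ij Kdim PsCdim Lrdim by simp
    show "K (Suc (Suc t)) $$ (i,j) = lam (i + k) * K (Suc t) $$ (i,j) - \<beta> * K t $$ (i,j) + (Ps (Suc t) * C (Suc t)) $$ (i,j)" for t
      unfolding KS using Lr_mult[OF Kc ij] ij Kdim PsCdim Lrdim by simp
  qed
  have mult_entry: "(M1 * M2) $$ (i,j) = (\<Sum>l<k. M1 $$ (i,l) * M2 $$ (l,j))"
    if "M1 \<in> carrier_mat n k" "M2 \<in> carrier_mat k k" "i < n" "j < k" for M1 M2 i j
    using that by (simp add: scalar_prod_def atLeast0LessThan)
  have Hm_eq: "Hm U k X s = H s" for s unfolding Hm_def H_def Q_def P_def Pi_def UrT_def UfT_def ..
  have Ps_eq: "Psim U k X Xi s = Ps s" for s unfolding Psim_def Ps_def W_def P_def Pi_def UrT_def UfT_def ..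
  have Cm_eq: "Cm U lam k \<beta> X Xi s = C s" for s unfolding C_def ..
  have pm: "poly_mat n p (Lrest lam d k) = mat_diag n (\<lambda>i. poly p (lam (i + k)))" for p
    unfolding Lrest_def n_def poly_mat_diag ..
  have K0H: "K 0 = H 0" unfolding K_def C0 by (rule right_mult_one_mat[OF Hc])
  show ?thesis
  proof
    fix t
    define Ci where "Ci = minv (C t)"
    note mc = minv_props[OF Cc dC[of t]]
    have Cic: "Ci \<in> carrier_mat k k" unfolding Ci_def using mc by simp
    have H_eq: "H t = K t * Ci"
    proof -
      have "K t * Ci = H t * (C t * Ci)" unfolding K_def by (rule assoc_mult_mat[OF Hc Cc Cic])
      also have "\<dots> = H t" unfolding Ci_def mc(2) by (rule right_mult_one_mat[OF Hc])
      finally show ?thesis by simp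
    qed
    define Dp where "Dp = mat_diag n (\<lambda>i. poly (pP \<beta> t) (lam (i + k)))"
    define Dq where "Dq s = mat_diag n (\<lambda>i. poly (qP \<beta> s) (lam (i + k)))" for s
    have Dpc: "Dp \<in> carrier_mat n n" unfolding Dp_def by simp
    have Dqc: "Dq s \<in> carrier_mat n n" for s unfolding Dq_def by simp
    have main: "K t * Ci = Dp * H 0 * Ci + msum n k (\<lambda>s. Dq s * Ps (t - 1 - s) * C (t - 1 - s) * Ci) t"
    proof (rule eq_matI)
      fix i j assume "i < dim_row (Dp * H 0 * Ci + msum n k (\<lambda>s. Dq s * Ps (t - 1 - s) * C (t - 1 - s) * Ci) t)"
        "j < dim_col (Dp * H 0 * Ci + msum n k (\<lambda>s. Dq s * Ps (t - 1 - s) * C (t - 1 - s) * Ci) t)"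
      then have ij: "i < n" "j < k" by (auto simp: msum_def)
      let ?x = "lam (i + k)"
      have DpH: "(Dp * H 0) $$ (i,l) = poly (pP \<beta> t) ?x * H 0 $$ (i,l)" if "l < k" for l
        using mat_diag_mult_left[OF Hc[of 0], of "\<lambda>i. poly (pP \<beta> t) (lam (i + k))"] ij that
        unfolding Dp_def by simp
      have DqF: "(Dq s * Ps r * C r * Ci) $$ (i,j) = (\<Sum>l<k. poly (qP \<beta> s) ?x * (Ps r * C r) $$ (i,l) * Ci $$ (l,j))" for s r
      proof -
        have "Dq s * Ps r * C r = Dq s * (Ps r * C r)" by (rule assoc_mult_mat[OF Dqc Psc Cc])
        moreover have "(Dq s * (Ps r * C r)) $$ (i,l) = poly (qP \<beta> s) ?x * (Ps r * C r) $$ (i,l)" if "l < k" for l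
          using mat_diag_mult_left[OF PsCc[of r], of "\<lambda>i. poly (qP \<beta> s) (lam (i + k))"] ij that
          unfolding Dq_def by simp
        ultimately show ?thesis
          using mult_entry[OF mult_carrier_mat[OF Dqc PsCc] Cic ij] by simp
      qed
      have lhs: "(K t * Ci) $$ (i,j) = (\<Sum>l<k. K t $$ (i,l) * Ci $$ (l,j))" by (rule mult_entry[OF Kc Cic ij])
      have r1: "(Dp * H 0 * Ci) $$ (i,j) = (\<Sum>l<k. poly (pP \<beta> t) ?x * H 0 $$ (i,l) * Ci $$ (l,j))"
        using mult_entry[OF mult_carrier_mat[OF Dpc Hc] Cic ij] DpH by simp
      have r2: "msum n k (\<lambda>s. Dq s * Ps (t - 1 - s) * C (t - 1 - s) * Ci) t $$ (i,j)
          = (\<Sum>s<t. \<Sum>l<k. poly (qP \<beta> s) ?x * (Ps (t - 1 - s) * C (t - 1 - s)) $$ (i,l) * Ci $$ (l,j))"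
        unfolding msum_def using ij DqF by simp
      have "(K t * Ci) $$ (i,j) = (\<Sum>l<k. (poly (pP \<beta> t) ?x * H 0 $$ (i,l)
          + (\<Sum>s<t. poly (qP \<beta> s) ?x * (Ps (t - 1 - s) * C (t - 1 - s)) $$ (i,l))) * Ci $$ (l,j))"
        unfolding lhs K0H[symmetric]
        by (rule sum.cong[OF refl]) (use Kent[where t = t, OF ij(1)] in simp)
      also have "\<dots> = (\<Sum>l<k. poly (pP \<beta> t) ?x * H 0 $$ (i,l) * Ci $$ (l,j))
          + (\<Sum>s<t. \<Sum>l<k. poly (qP \<beta> s) ?x * (Ps (t - 1 - s) * C (t - 1 - s)) $$ (i,l) * Ci $$ (l,j))"
      proof -
        have "(\<Sum>l<k. (poly (pP \<beta> t) ?x * H 0 $$ (i,l)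
            + (\<Sum>s<t. poly (qP \<beta> s) ?x * (Ps (t - 1 - s) * C (t - 1 - s)) $$ (i,l))) * Ci $$ (l,j))
          = (\<Sum>l<k. poly (pP \<beta> t) ?x * H 0 $$ (i,l) * Ci $$ (l,j))
          + (\<Sum>l<k. \<Sum>s<t. poly (qP \<beta> s) ?x * (Ps (t - 1 - s) * C (t - 1 - s)) $$ (i,l) * Ci $$ (l,j))"
          by (simp only: distrib_right sum.distrib sum_distrib_right)
        also have "(\<Sum>l<k. \<Sum>s<t. poly (qP \<beta> s) ?x * (Ps (t - 1 - s) * C (t - 1 - s)) $$ (i,l) * Ci $$ (l,j))
          = (\<Sum>s<t. \<Sum>l<k. poly (qP \<beta> s) ?x * (Ps (t - 1 - s) * C (t - 1 - s)) $$ (i,l) * Ci $$ (l,j))"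
          by (rule sum.swap)
        finally show ?thesis .
      qed
      also have "\<dots> = (Dp * H 0 * Ci + msum n k (\<lambda>s. Dq s * Ps (t - 1 - s) * C (t - 1 - s) * Ci) t) $$ (i,j)"
        using r1 r2 ij Cic by (simp add: msum_def)
      finally show "(K t * Ci) $$ (i,j) = (Dp * H 0 * Ci + msum n k (\<lambda>s. Dq s * Ps (t - 1 - s) * C (t - 1 - s) * Ci) t) $$ (i,j)" .
    qed (use Kc Cic in \<open>auto simp: msum_def\<close>)
    show "Hm U k X t = poly_mat (d - k) (pP \<beta> t) (Lrest lam d k) * Hm U k X 0 * minv (Cm U lam k \<beta> X Xi t)
      + msum (d - k) k
          (\<lambda>s. poly_mat (d - k) (qP \<beta> s) (Lrest lam d k) * Psim U k X Xi (t - 1 - s)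
               * Cm U lam k \<beta> X Xi (t - 1 - s) * minv (Cm U lam k \<beta> X Xi t)) t"
      unfolding n_def[symmetric] Hm_eq Ps_eq Cm_eq pm Ci_def[symmetric] H_eq using main unfolding Dp_def Dq_def .
  qed
qed

end
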